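(* Let $d\ge1$, $K_d=\{x\in\mathbf{R}^d:x_i\ge0\ (i=1,\dots,d),\ \sum_{i=1}^dx_i\le1\}$, $a\ge0$, and $(\mu_n)_{n\ge1}$ Borel probability measures on $K_d$. For $n\ge1$, $f\in\mathscr{C}(K_d)$ and $x\in K_d$ let $$C_n(f)(x)=\sum_{h\in\{0,\dots,n\}^d,\ |h|\le n}\frac{n!}{h_1!\cdots h_d!(n-|h|)!}x_1^{h_1}\cdots x_d^{h_d}\Big(1-\sum_{i=1}^dx_i\Big)^{n-|h|}\int_{K_d}f\Big(\frac{h+as}{n+a}\Big)\,d\mu_n(s).$$ Then each $C_n$ maps continuous axially convex functions on $K_d$ into (continuous) axially convex functions.
   Context: $|h|=h_1+\dots+h_d$. A function $f\in\mathscr{C}(K_d)$ is axially convex if it is convex on each segment in $K_d$ parallel to a segment joining two vertices (extreme points) of $K_d$. *)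

theory Defs
  imports "HOL-Probability.Probability"
begin

definition std_simplex :: "(real ^ 'n::finite) set" where
  "std_simplex = {x. (\<forall>i. 0 \<le> x $ i) \<and> (\<Sum>i\<in>UNIV. x $ i) \<le> 1}"

definition simplex_vertices :: "(real ^ 'n::finite) set" where
  "simplex_vertices = insert 0 (range (\<lambda>i. axis i 1))"

definition axially_convex :: "(real ^ 'n::finite \<Rightarrow> real) \<Rightarrow> bool" where
  "axially_convex f \<longleftrightarrow>
     (\<forall>x\<in>std_simplex. \<forall>y\<in>std_simplex.
        (\<exists>u\<in>simplex_vertices. \<exists>w\<in>simplex_vertices. \<exists>c::real. y - x = c *\<^sub>R (u - w))
        \<longrightarrow> convex_on (closed_segment x y) f)"

definition multi_indices :: "nat \<Rightarrow> ('n::finite \<Rightarrow> nat) set" where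
  "multi_indices n = {h. (\<forall>i. h i \<le> n) \<and> (\<Sum>i\<in>UNIV. h i) \<le> n}"

definition C_op :: "real \<Rightarrow> (real ^ 'n) measure \<Rightarrow> nat \<Rightarrow> (real ^ 'n::finite \<Rightarrow> real)
                     \<Rightarrow> real ^ 'n \<Rightarrow> real" where
  "C_op a \<mu> n f x =
     (\<Sum>h\<in>multi_indices n.
        fact n / ((\<Prod>i\<in>UNIV. fact (h i)) * fact (n - (\<Sum>i\<in>UNIV. h i)))
        * (\<Prod>i\<in>UNIV. (x $ i) ^ (h i))
        * (1 - (\<Sum>i\<in>UNIV. x $ i)) ^ (n - (\<Sum>i\<in>UNIV. h i))
        * (\<integral>s. f ((1 / (real n + a)) *\<^sub>R ((\<chi> i. real (h i)) + a *\<^sub>R s)) \<partial>\<mu>))"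

end

theory Submission
  imports Defs
begin

definition sz :: "('n::finite \<Rightarrow> nat) \<Rightarrow> nat" where "sz h = (\<Sum>i\<in>UNIV. h i)"
definition mlt :: "nat \<Rightarrow> ('n::finite \<Rightarrow> nat) \<Rightarrow> real" where
  "mlt n h = fact n / ((\<Prod>i\<in>UNIV. fact (h i)) * fact (n - sz h))"
definition mon :: "('n::finite \<Rightarrow> nat) \<Rightarrow> real^'n \<Rightarrow> real" where
  "mon h x = (\<Prod>i\<in>UNIV. (x$i)^(h i))"
definition sl :: "real^'n::finite \<Rightarrow> real" where "sl x = 1 - (\<Sum>i\<in>UNIV. x$i)"
definition Bern :: "nat \<Rightarrow> (('n::finite \<Rightarrow> nat) \<Rightarrow> real) \<Rightarrow> real^'n \<Rightarrow> real" where
  "Bern n F x = (\<Sum>h\<in>multi_indices n. mlt n h * mon h x * sl x ^ (n - sz h) * F h)"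
definition incr :: "'n \<Rightarrow> ('n \<Rightarrow> nat) \<Rightarrow> ('n \<Rightarrow> nat)" where "incr i k = k(i := Suc (k i))"
definition Dv :: "real^'n::finite \<Rightarrow> (('n \<Rightarrow> nat) \<Rightarrow> real) \<Rightarrow> ('n \<Rightarrow> nat) \<Rightarrow> real" where
  "Dv v F k = (\<Sum>i\<in>UNIV. v$i * (F (incr i k) - F k))"

lemma mi_iff: "h \<in> multi_indices n \<longleftrightarrow> sz h \<le> n"
proof -
  have "h i \<le> sz h" for i unfolding sz_def by (rule member_le_sum) auto
  thus ?thesis unfolding multi_indices_def sz_def by (auto intro: le_trans)
qed

lemma finite_mi: "finite (multi_indices n :: ('n::finite \<Rightarrow> nat) set)"
proof -
  have "multi_indices n \<subseteq> PiE UNIV (\<lambda>_::'n. {..n})"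
    unfolding multi_indices_def by (auto simp: PiE_def Pi_def extensional_def)
  thus ?thesis by (rule finite_subset) (auto intro: finite_PiE)
qed

lemma sz_incr: "sz (incr j k) = Suc (sz k)"
proof -
  have "sz (incr j k) = incr j k j + (\<Sum>i\<in>UNIV-{j}. incr j k i)"
    unfolding sz_def by (simp add: sum.remove)
  also have "(\<Sum>i\<in>UNIV-{j}. incr j k i) = (\<Sum>i\<in>UNIV-{j}. k i)"
    by (rule sum.cong) (auto simp: incr_def)
  also have "incr j k j + \<dots> = Suc (k j + (\<Sum>i\<in>UNIV-{j}. k i))" by (simp add: incr_def)
  also have "k j + (\<Sum>i\<in>UNIV-{j}. k i) = sz k" unfolding sz_def by (simp add: sum.remove)
  finally show ?thesis .
qed

lemma prodfact_incr: fixes k :: "'n::finite \<Rightarrow> nat" shows "(\<Prod>i\<in>UNIV. fact (incr j k i) :: real) = real (Suc (k j)) * (\<Prod>i\<in>UNIV. fact (k i))"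
proof -
  have "(\<Prod>i\<in>UNIV. fact (incr j k i) :: real) = fact (incr j k j) * (\<Prod>i\<in>UNIV-{j}. fact (incr j k i))"
    by (rule prod.remove) auto
  also have "(\<Prod>i\<in>UNIV-{j}. fact (incr j k i) :: real) = (\<Prod>i\<in>UNIV-{j}. fact (k i))"
    by (rule prod.cong) (auto simp: incr_def)
  also have "fact (incr j k j) = (real (Suc (k j))) * (fact (k j) :: real)" by (simp add: incr_def)
  also have "real (Suc (k j)) * fact (k j) * (\<Prod>i\<in>UNIV-{j}. fact (k i)) = real (Suc (k j)) * (\<Prod>i\<in>UNIV. fact (k i) :: real)"
    by (subst prod.remove[of UNIV j]) auto
  finally show ?thesis .
qed

lemma mlt_incr: assumes "sz k \<le> m"
  shows "mlt (Suc m) (incr j k) * real (Suc (k j)) = real (Suc m) * mlt m k"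
proof -
  have e: "Suc m - sz (incr j k) = m - sz k" by (simp add: sz_incr)
  have p: "(\<Prod>i\<in>UNIV. fact (k i) :: real) \<noteq> 0" by (simp)
  have c: "real (Suc (k j)) \<noteq> 0" by simp
  have g: "\<And>X A B c::real. c \<noteq> 0 \<Longrightarrow> X / (c * A * B) * c = X / (A * B)" by simp
  show ?thesis unfolding mlt_def e prodfact_incr g[OF c] fact_Suc by simp
qed

lemma mlt_suc: assumes "sz h \<le> m"
  shows "mlt (Suc m) h * real (Suc m - sz h) = real (Suc m) * mlt m h"
proof -
  have e: "Suc m - sz h = Suc (m - sz h)" using assms by simp
  have c: "real (Suc (m - sz h)) \<noteq> 0" by simp
  have g: "\<And>X A B c::real. c \<noteq> 0 \<Longrightarrow> X / (A * (c * B)) * c = X / (A * B)" by simp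
  show ?thesis unfolding mlt_def e fact_Suc[of "m - sz h"] of_nat_mult g[OF c] fact_Suc[of m] by simp
qed

lemma dprod:
  fixes x v :: "real^'n::finite"
  assumes "finite S"
  shows "((\<lambda>t. \<Prod>i\<in>S. (x$i + t * v$i)^(h i)) has_real_derivative
     (\<Sum>j\<in>S. v$j * real (h j) * (\<Prod>i\<in>S. (x$i + t * v$i)^((h(j := h j - 1)) i)))) (at t)"
  using assms
proof (induction S rule: finite_induct)
  case empty
  then show ?case by simp
next
  case (insert a S)
  let ?q = "\<lambda>i. x$i + t * v$i"
  have da: "((\<lambda>t. (x$a + t * v$a)^(h a)) has_real_derivative
      real (h a) * (v$a * ?q a ^ (h a - Suc 0))) (at t)"
    by (rule DERIV_power) (auto intro!: derivative_eq_intros)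
  have m: "((\<lambda>t. (x$a + t * v$a)^(h a) * (\<Prod>i\<in>S. (x$i + t * v$i)^(h i))) has_real_derivative
     (?q a ^ h a * (\<Sum>j\<in>S. v$j * real (h j) * (\<Prod>i\<in>S. ?q i^((h(j := h j - 1)) i)))
      + real (h a) * (v$a * ?q a ^ (h a - Suc 0)) * (\<Prod>i\<in>S. ?q i ^ h i))) (at t)"
    by (rule DERIV_cong[OF DERIV_mult[OF da insert.IH]]) (simp add: algebra_simps)
  have e1: "(\<Prod>i\<in>insert a S. ?q i^((h(a := h a - 1)) i)) = ?q a ^ (h a - 1) * (\<Prod>i\<in>S. ?q i ^ h i)"
  proof -
    have "(\<Prod>i\<in>S. ?q i^((h(a := h a - 1)) i)) = (\<Prod>i\<in>S. ?q i ^ h i)"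
      using insert.hyps by (intro prod.cong) auto
    thus ?thesis using insert.hyps by (simp add: prod.insert)
  qed
  have e2: "(\<Prod>i\<in>insert a S. ?q i^((h(j := h j - 1)) i)) = ?q a ^ h a * (\<Prod>i\<in>S. ?q i^((h(j := h j - 1)) i))"
    if "j \<in> S" for j
    using insert that by (auto intro!: prod.cong)
  have "(\<Sum>j\<in>insert a S. v$j * real (h j) * (\<Prod>i\<in>insert a S. ?q i^((h(j := h j - 1)) i)))
      = v$a * real (h a) * (?q a ^ (h a - 1) * (\<Prod>i\<in>S. ?q i ^ h i))
        + (\<Sum>j\<in>S. v$j * real (h j) * (?q a ^ h a * (\<Prod>i\<in>S. ?q i^((h(j := h j - 1)) i))))"
  proof -
    have "(\<Sum>j\<in>insert a S. v$j * real (h j) * (\<Prod>i\<in>insert a S. ?q i^((h(j := h j - 1)) i)))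
      = v$a * real (h a) * (\<Prod>i\<in>insert a S. ?q i^((h(a := h a - 1)) i))
        + (\<Sum>j\<in>S. v$j * real (h j) * (\<Prod>i\<in>insert a S. ?q i^((h(j := h j - 1)) i)))"
      by (rule sum.insert[OF insert.hyps])
    also have "(\<Sum>j\<in>S. v$j * real (h j) * (\<Prod>i\<in>insert a S. ?q i^((h(j := h j - 1)) i)))
      = (\<Sum>j\<in>S. v$j * real (h j) * (?q a ^ h a * (\<Prod>i\<in>S. ?q i^((h(j := h j - 1)) i))))"
      by (rule sum.cong[OF refl]) (simp only: e2)
    finally show ?thesis by (simp only: e1)
  qed
  also have "\<dots> = ?q a ^ h a * (\<Sum>j\<in>S. v$j * real (h j) * (\<Prod>i\<in>S. ?q i^((h(j := h j - 1)) i)))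
      + real (h a) * (v$a * ?q a ^ (h a - Suc 0)) * (\<Prod>i\<in>S. ?q i ^ h i)"
    by (simp add: sum_distrib_left algebra_simps)
  finally have eq: "(\<Sum>j\<in>insert a S. v$j * real (h j) * (\<Prod>i\<in>insert a S. ?q i^((h(j := h j - 1)) i))) = 
     ?q a ^ h a * (\<Sum>j\<in>S. v$j * real (h j) * (\<Prod>i\<in>S. ?q i^((h(j := h j - 1)) i)))
      + real (h a) * (v$a * ?q a ^ (h a - Suc 0)) * (\<Prod>i\<in>S. ?q i ^ h i)" .
  show ?case unfolding eq using m insert by (simp add: prod.insert)
qed

lemma dmon:
  fixes x v :: "real^'n::finite"
  shows "((\<lambda>t. mon h (x + t *\<^sub>R v)) has_real_derivative
     (\<Sum>j\<in>UNIV. v$j * real (h j) * mon (h(j := h j - 1)) (x + t *\<^sub>R v))) (at t)"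
  unfolding mon_def using dprod[of UNIV x v h t] by simp

lemma dsl:
  fixes x v :: "real^'n::finite"
  shows "((\<lambda>t. sl (x + t *\<^sub>R v)) has_real_derivative - (\<Sum>i\<in>UNIV. v$i)) (at t)"
  unfolding sl_def by (auto intro!: derivative_eq_intros simp: sum_negf[symmetric])

lemma T1:
  fixes y :: "real^'n::finite" and F :: "('n \<Rightarrow> nat) \<Rightarrow> real"
  shows "(\<Sum>h\<in>multi_indices (Suc m). mlt (Suc m) h * real (h j) * mon (h(j:=h j - 1)) y * S^(Suc m - sz h) * F h)
    = real (Suc m) * (\<Sum>k\<in>multi_indices m. mlt m k * mon k y * S^(m - sz k) * F (incr j k))"
proof -
  let ?T = "{h\<in>multi_indices (Suc m). 0 < h j}"
  have "(\<Sum>h\<in>multi_indices (Suc m). mlt (Suc m) h * real (h j) * mon (h(j:=h j - 1)) y * S^(Suc m - sz h) * F h)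
     = (\<Sum>h\<in>?T. mlt (Suc m) h * real (h j) * mon (h(j:=h j - 1)) y * S^(Suc m - sz h) * F h)"
    by (rule sum.mono_neutral_right) (auto simp: finite_mi)
  also have "\<dots> = (\<Sum>k\<in>multi_indices m. real (Suc m) * (mlt m k * mon k y * S^(m - sz k) * F (incr j k)))"
    (is "_ = ?R")
  proof -
  have "?R = (\<Sum>h\<in>?T. mlt (Suc m) h * real (h j) * mon (h(j:=h j - 1)) y * S^(Suc m - sz h) * F h)"
  proof (rule sum.reindex_bij_witness[where i = "\<lambda>h. h(j := h j - 1)" and j = "incr j"])
    fix k :: "'n \<Rightarrow> nat" assume k: "k \<in> multi_indices m"
    show "(incr j k)(j := incr j k j - 1) = k" by (auto simp: incr_def)
    show "incr j k \<in> ?T" using k sz_incr[of j k] by (auto simp: mi_iff incr_def)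
    have s: "sz k \<le> m" using k by (simp add: mi_iff)
    show "mlt (Suc m) (incr j k) * real (incr j k j) * mon ((incr j k)(j := incr j k j - 1)) y *
          S ^ (Suc m - sz (incr j k)) * F (incr j k) =
          real (Suc m) * (mlt m k * mon k y * S ^ (m - sz k) * F (incr j k))"
    proof -
      have "(incr j k)(j := incr j k j - 1) = k" by (auto simp: incr_def)
      moreover have "incr j k j = Suc (k j)" by (simp add: incr_def)
      ultimately show ?thesis using mlt_incr[OF s, of j] by (simp add: sz_incr mult.assoc)
    qed
  next
    fix h :: "'n \<Rightarrow> nat" assume h: "h \<in> ?T"
    show "incr j (h(j := h j - 1)) = h" using h by (auto simp: incr_def)
    have "sz h = Suc (sz (h(j := h j - 1)))"
      using h sz_incr[of j "h(j := h j - 1)"] by (auto simp: incr_def fun_upd_idem)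
    thus "h(j := h j - 1) \<in> multi_indices m" using h by (simp add: mi_iff)
  qed
  thus ?thesis by simp
  qed
  also have "\<dots> = real (Suc m) * (\<Sum>k\<in>multi_indices m. mlt m k * mon k y * S^(m - sz k) * F (incr j k))"
    by (simp add: sum_distrib_left)
  finally show ?thesis .
qed

lemma T2:
  fixes y :: "real^'n::finite" and F :: "('n \<Rightarrow> nat) \<Rightarrow> real"
  shows "(\<Sum>h\<in>multi_indices (Suc m). mlt (Suc m) h * real (Suc m - sz h) * mon h y * S^(Suc m - sz h - 1) * F h)
    = real (Suc m) * (\<Sum>k\<in>multi_indices m. mlt m k * mon k y * S^(m - sz k) * F k)"
proof -
  have "(\<Sum>h\<in>multi_indices (Suc m). mlt (Suc m) h * real (Suc m - sz h) * mon h y * S^(Suc m - sz h - 1) * F h)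
    = (\<Sum>h\<in>multi_indices m. mlt (Suc m) h * real (Suc m - sz h) * mon h y * S^(Suc m - sz h - 1) * F h)"
    by (rule sum.mono_neutral_right) (auto simp: finite_mi mi_iff)
  also have "\<dots> = (\<Sum>k\<in>multi_indices m. real (Suc m) * (mlt m k * mon k y * S^(m - sz k) * F k))"
  proof (rule sum.cong)
    fix k :: "'n \<Rightarrow> nat" assume "k \<in> multi_indices m"
    hence s: "sz k \<le> m" by (simp add: mi_iff)
    hence "Suc m - sz k - 1 = m - sz k" by simp
    thus "mlt (Suc m) k * real (Suc m - sz k) * mon k y * S^(Suc m - sz k - 1) * F k =
       real (Suc m) * (mlt m k * mon k y * S^(m - sz k) * F k)"
      using mlt_suc[OF s] by (simp add: mult.assoc)
  qed simp
  also have "\<dots> = real (Suc m) * (\<Sum>k\<in>multi_indices m. mlt m k * mon k y * S^(m - sz k) * F k)"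
    by (simp add: sum_distrib_left)
  finally show ?thesis .
qed

lemma mi0: "multi_indices 0 = {(\<lambda>_. 0) :: 'n::finite \<Rightarrow> nat}"
  by (auto simp: mi_iff sz_def)

lemma Bern0: "Bern 0 F (z::real^'n::finite) = F (\<lambda>_. 0)"
  by (simp add: Bern_def mi0 mlt_def mon_def sz_def)

lemma alg:
  fixes y v :: "real^'n::finite" and F :: "('n \<Rightarrow> nat) \<Rightarrow> real" and s :: real
  shows "(\<Sum>h\<in>multi_indices (Suc m). mlt (Suc m) h *
      ((\<Sum>j\<in>UNIV. v$j * real (h j) * mon (h(j := h j - 1)) y) * s ^ (Suc m - sz h)
        + mon h y * (real (Suc m - sz h) * (- (\<Sum>i\<in>UNIV. v$i) * s ^ (Suc m - sz h - Suc 0)))) * F h)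
    = real (Suc m) * (\<Sum>k\<in>multi_indices m. mlt m k * mon k y * s^(m - sz k) * Dv v F k)"
proof -
  let ?M = "multi_indices (Suc m)"
  let ?V = "\<Sum>i\<in>UNIV. v$i"
  have "(\<Sum>h\<in>?M. mlt (Suc m) h *
      ((\<Sum>j\<in>UNIV. v$j * real (h j) * mon (h(j := h j - 1)) y) * s ^ (Suc m - sz h)
        + mon h y * (real (Suc m - sz h) * (- ?V * s ^ (Suc m - sz h - Suc 0)))) * F h)
     = (\<Sum>h\<in>?M. (\<Sum>j\<in>UNIV. v$j * (mlt (Suc m) h * real (h j) * mon (h(j := h j - 1)) y * s ^ (Suc m - sz h) * F h))
        - ?V * (mlt (Suc m) h * real (Suc m - sz h) * mon h y * s ^ (Suc m - sz h - 1) * F h))"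
    by (rule sum.cong[OF refl]) (simp add: sum_distrib_left sum_distrib_right algebra_simps)
  also have "\<dots> = (\<Sum>j\<in>UNIV. v$j * (\<Sum>h\<in>?M. mlt (Suc m) h * real (h j) * mon (h(j := h j - 1)) y * s ^ (Suc m - sz h) * F h))
        - ?V * (\<Sum>h\<in>?M. mlt (Suc m) h * real (Suc m - sz h) * mon h y * s ^ (Suc m - sz h - 1) * F h)"
    by (simp add: sum_subtractf sum_distrib_left sum.swap[of _ ?M UNIV])
  also have "\<dots> = (\<Sum>j\<in>UNIV. v$j * (real (Suc m) * (\<Sum>k\<in>multi_indices m. mlt m k * mon k y * s^(m - sz k) * F (incr j k))))
        - ?V * (real (Suc m) * (\<Sum>k\<in>multi_indices m. mlt m k * mon k y * s^(m - sz k) * F k))"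
    by (simp only: T1 T2)
  also have "\<dots> = real (Suc m) * (\<Sum>k\<in>multi_indices m. mlt m k * mon k y * s^(m - sz k) * Dv v F k)"
  proof -
    have "(\<Sum>k\<in>multi_indices m. mlt m k * mon k y * s^(m - sz k) * Dv v F k)
      = (\<Sum>k\<in>multi_indices m. (\<Sum>j\<in>UNIV. v$j * (mlt m k * mon k y * s^(m - sz k) * F (incr j k)))
          - ?V * (mlt m k * mon k y * s^(m - sz k) * F k))"
      by (rule sum.cong[OF refl]) (simp add: Dv_def sum_distrib_left sum_distrib_right sum_subtractf algebra_simps)
    also have "\<dots> = (\<Sum>j\<in>UNIV. v$j * (\<Sum>k\<in>multi_indices m. mlt m k * mon k y * s^(m - sz k) * F (incr j k)))
        - ?V * (\<Sum>k\<in>multi_indices m. mlt m k * mon k y * s^(m - sz k) * F k)"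
      by (simp add: sum_subtractf sum_distrib_left sum.swap[of _ "multi_indices m" UNIV])
    finally have E: "(\<Sum>k\<in>multi_indices m. mlt m k * mon k y * s^(m - sz k) * Dv v F k) = 
      (\<Sum>j\<in>UNIV. v$j * (\<Sum>k\<in>multi_indices m. mlt m k * mon k y * s^(m - sz k) * F (incr j k)))
        - ?V * (\<Sum>k\<in>multi_indices m. mlt m k * mon k y * s^(m - sz k) * F k)" .
    show ?thesis unfolding E by (simp add: sum_distrib_left right_diff_distrib mult.left_commute del: of_nat_Suc)
  qed
  finally show ?thesis .
qed

lemma Bern_deriv:
  fixes x v :: "real^'n::finite" and F :: "('n \<Rightarrow> nat) \<Rightarrow> real"
  shows "((\<lambda>t. Bern n F (x + t *\<^sub>R v)) has_real_derivative (real n * Bern (n - 1) (Dv v F) (x + t *\<^sub>R v))) (at t)"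
proof (cases n)
  case 0
  then show ?thesis by (simp add: Bern0)
next
  case (Suc m)
  let ?y = "x + t *\<^sub>R v"
  let ?V = "\<Sum>i\<in>UNIV. v$i"
  have d: "((\<lambda>t. mlt (Suc m) h * mon h (x + t *\<^sub>R v) * sl (x + t *\<^sub>R v) ^ (Suc m - sz h) * F h) has_real_derivative
     mlt (Suc m) h *
      ((\<Sum>j\<in>UNIV. v$j * real (h j) * mon (h(j := h j - 1)) ?y) * sl ?y ^ (Suc m - sz h)
        + mon h ?y * (real (Suc m - sz h) * (- ?V * sl ?y ^ (Suc m - sz h - Suc 0)))) * F h) (at t)" for h
    by (rule DERIV_cong, (rule DERIV_mult DERIV_const DERIV_cmult DERIV_power dmon dsl)+) (simp add: algebra_simps)
  have "((\<lambda>t. Bern n F (x + t *\<^sub>R v)) has_real_derivative (\<Sum>h\<in>multi_indices (Suc m). mlt (Suc m) h *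
      ((\<Sum>j\<in>UNIV. v$j * real (h j) * mon (h(j := h j - 1)) ?y) * sl ?y ^ (Suc m - sz h)
        + mon h ?y * (real (Suc m - sz h) * (- ?V * sl ?y ^ (Suc m - sz h - Suc 0)))) * F h)) (at t)"
    unfolding Bern_def Suc by (rule DERIV_sum[OF d])
  then show ?thesis unfolding alg Suc by (simp add: Bern_def)
qed

lemma simplex_comb:
  assumes x: "x \<in> std_simplex" and y: "y \<in> std_simplex" and t: "0 \<le> t" "t \<le> 1"
  shows "x + t *\<^sub>R (y - x) \<in> std_simplex"
proof -
  have eq: "x + t *\<^sub>R (y - x) = (1 - t) *\<^sub>R x + t *\<^sub>R y" by (simp add: algebra_simps)
  have "0 \<le> ((1 - t) *\<^sub>R x + t *\<^sub>R y) $ i" for i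
    using x y t by (auto simp: std_simplex_def intro!: add_nonneg_nonneg mult_nonneg_nonneg)
  moreover have "(\<Sum>i\<in>UNIV. ((1 - t) *\<^sub>R x + t *\<^sub>R y) $ i) \<le> 1"
  proof -
    have "(\<Sum>i\<in>UNIV. ((1 - t) *\<^sub>R x + t *\<^sub>R y) $ i) = (1 - t) * (\<Sum>i\<in>UNIV. x$i) + t * (\<Sum>i\<in>UNIV. y$i)"
      by (simp add: sum.distrib sum_distrib_left)
    also have "\<dots> \<le> (1 - t) * 1 + t * 1"
      using x y t by (intro add_mono mult_left_mono) (auto simp: std_simplex_def)
    finally show ?thesis by simp
  qed
  ultimately show ?thesis unfolding eq std_simplex_def by auto
qed

lemma Bern_nonneg:
  fixes y :: "real^'n::finite" and G :: "('n \<Rightarrow> nat) \<Rightarrow> real"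
  assumes y: "y \<in> std_simplex" and G: "\<And>k. k \<in> multi_indices n \<Longrightarrow> 0 \<le> G k"
  shows "0 \<le> Bern n G y"
  unfolding Bern_def
proof (intro sum_nonneg mult_nonneg_nonneg)
  fix h :: "'n \<Rightarrow> nat" assume h: "h \<in> multi_indices n"
  show "0 \<le> mlt n h" unfolding mlt_def by (intro divide_nonneg_nonneg mult_nonneg_nonneg prod_nonneg) auto
  show "0 \<le> mon h y" unfolding mon_def using y by (intro prod_nonneg) (auto simp: std_simplex_def)
  show "0 \<le> sl y ^ (n - sz h)" unfolding sl_def using y by (auto simp: std_simplex_def)
  show "0 \<le> G h" using G h .
qed

lemma Bern_seg_convex:
  fixes F :: "('n::finite \<Rightarrow> nat) \<Rightarrow> real"
  assumes x: "x \<in> std_simplex" and y: "y \<in> std_simplex"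
    and DD: "\<And>k. 2 \<le> n \<Longrightarrow> k \<in> multi_indices (n - 2) \<Longrightarrow> 0 \<le> Dv (y - x) (Dv (y - x) F) k"
  shows "convex_on (closed_segment x y) (Bern n F)"
proof -
  define v where "v = y - x"
  define \<phi> where "\<phi> t = Bern n F (x + t *\<^sub>R v)" for t
  define \<psi> where "\<psi> t = real n * Bern (n - 1) (Dv v F) (x + t *\<^sub>R v)" for t
  have d1: "(\<phi> has_real_derivative \<psi> t) (at t)" for t
    unfolding \<phi>_def \<psi>_def by (rule Bern_deriv)
  have d2: "(\<psi> has_real_derivative real n * (real (n - 1) * Bern (n - 1 - 1) (Dv v (Dv v F)) (x + t *\<^sub>R v))) (at t)" for t
    unfolding \<psi>_def by (rule DERIV_cmult, rule Bern_deriv)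
  have nn: "0 \<le> real n * (real (n - 1) * Bern (n - 1 - 1) (Dv v (Dv v F)) (x + t *\<^sub>R v))"
    if "0 \<le> t" "t \<le> 1" for t
  proof (cases "2 \<le> n")
    case True
    have "0 \<le> Bern (n - 1 - 1) (Dv v (Dv v F)) (x + t *\<^sub>R v)"
      using True DD simplex_comb[OF x y that] unfolding v_def
      by (intro Bern_nonneg) (auto simp: diff_diff_add numeral_2_eq_2)
    thus ?thesis by simp
  next
    case False
    hence "real (n - 1) = 0 \<or> real n = 0" by auto
    thus ?thesis by auto
  qed
  have cphi: "convex_on {0..1} \<phi>"
  proof (rule convex_on_realI[where f' = \<psi>])
    show "connected {0..1::real}" by simp
    show "(\<phi> has_real_derivative \<psi> t) (at t)" for t by (rule d1)
    fix a b :: real assume "a \<in> {0..1}" "b \<in> {0..1}" "a \<le> b"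
    thus "\<psi> a \<le> \<psi> b"
    proof (intro deriv_nonneg_imp_mono[OF d2])
      fix z assume "z \<in> {a..b}"
      thus "0 \<le> real n * (real (n - 1) * Bern (n - 1 - 1) (Dv v (Dv v F)) (x + z *\<^sub>R v))"
        using \<open>a \<in> {0..1}\<close> \<open>b \<in> {0..1}\<close> by (intro nn) auto
    qed
  qed
  show ?thesis
  proof (rule convex_onI)
    show "convex (closed_segment x y)" by (rule convex_closed_segment)
    fix t :: real and p q assume t: "0 < t" "t < 1" and p: "p \<in> closed_segment x y" and q: "q \<in> closed_segment x y"
    obtain u where u: "0 \<le> u" "u \<le> 1" "p = x + u *\<^sub>R v"
      using p unfolding in_segment v_def by (auto simp: algebra_simps)
    obtain w where w: "0 \<le> w" "w \<le> 1" "q = x + w *\<^sub>R v"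
      using q unfolding in_segment v_def by (auto simp: algebra_simps)
    have "(1 - t) *\<^sub>R p + t *\<^sub>R q = x + ((1 - t) * u + t * w) *\<^sub>R v"
      using u w by (simp add: algebra_simps)
    hence "Bern n F ((1 - t) *\<^sub>R p + t *\<^sub>R q) = \<phi> ((1 - t) * u + t * w)" by (simp add: \<phi>_def)
    also have "\<dots> \<le> (1 - t) * \<phi> u + t * \<phi> w"
      using convex_onD[OF cphi, of t u w] t u w by simp
    also have "\<dots> = (1 - t) * Bern n F p + t * Bern n F q" using u w by (simp add: \<phi>_def)
    finally show "Bern n F ((1 - t) *\<^sub>R p + t *\<^sub>R q) \<le> (1 - t) * Bern n F p + t * Bern n F q" .
  qed
qed

lemma sum_A:
  fixes G :: "'n::finite \<Rightarrow> real"
  shows "(\<Sum>a\<in>UNIV. (c *\<^sub>R (axis i 1 - axis j 1) :: real^'n) $ a * G a) = c * (G i - G j)"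
proof -
  have "(\<Sum>a\<in>UNIV. (c *\<^sub>R (axis i 1 - axis j 1) :: real^'n) $ a * G a)
      = (\<Sum>a\<in>UNIV. c * (if a = i then G a else 0)) - (\<Sum>a\<in>UNIV. c * (if a = j then G a else 0))"
    unfolding sum_subtractf[symmetric] by (rule sum.cong) (auto simp: axis_def algebra_simps)
  also have "\<dots> = c * (G i - G j)" by (simp add: sum_distrib_left[symmetric] algebra_simps)
  finally show ?thesis .
qed

lemma sum_B:
  fixes G :: "'n::finite \<Rightarrow> real"
  shows "(\<Sum>a\<in>UNIV. (c *\<^sub>R axis i 1 :: real^'n) $ a * G a) = c * G i"
proof -
  have "(\<Sum>a\<in>UNIV. (c *\<^sub>R axis i 1 :: real^'n) $ a * G a) = (\<Sum>a\<in>UNIV. c * (if a = i then G a else 0))"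
    by (rule sum.cong) (auto simp: axis_def)
  also have "\<dots> = c * G i" by (simp add: sum_distrib_left[symmetric])
  finally show ?thesis .
qed

lemma incr_comm: "incr i (incr j k) = incr j (incr i k)"
  by (auto simp: incr_def fun_eq_iff)

lemma DD_A:
  "Dv (c *\<^sub>R (axis i 1 - axis j 1) :: real^'n::finite) (Dv (c *\<^sub>R (axis i 1 - axis j 1)) F) k
    = c\<^sup>2 * (F (incr i (incr i k)) + F (incr j (incr j k)) - 2 * F (incr i (incr j k)))"
  unfolding Dv_def sum_A using incr_comm[of i j k] by (simp add: power2_eq_square algebra_simps)

lemma DD_B:
  "Dv (c *\<^sub>R axis i 1 :: real^'n::finite) (Dv (c *\<^sub>R axis i 1) F) k
    = c\<^sup>2 * (F (incr i (incr i k)) + F k - 2 * F (incr i k))"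
  unfolding Dv_def sum_B by (simp add: power2_eq_square algebra_simps)

lemma closed_simplex: "closed (std_simplex :: (real^'n::finite) set)"
proof -
  have eq: "std_simplex = (\<Inter>i. {x::real^'n. 0 \<le> x$i}) \<inter> {x. (\<Sum>i\<in>UNIV. x$i) \<le> 1}"
    by (auto simp: std_simplex_def)
  have c1: "closed {x::real^'n. (\<Sum>i\<in>UNIV. x$i) \<le> 1}"
    by (intro closed_Collect_le continuous_intros)
  have c2: "closed {x::real^'n. 0 \<le> x$i}" for i
    by (intro closed_Collect_le continuous_intros)
  show ?thesis by (simp only: eq) (intro closed_Int closed_INT ballI c1 c2)
qed

lemma bounded_simplex: "bounded (std_simplex :: (real^'n::finite) set)"
  unfolding bounded_iff
proof (intro exI ballI)
  fix x :: "real^'n" assume x: "x \<in> std_simplex"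
  have "norm x \<le> (\<Sum>i\<in>UNIV. \<bar>x$i\<bar>)" by (rule norm_le_l1_cart)
  also have "\<dots> = (\<Sum>i\<in>UNIV. x$i)" using x by (auto simp: std_simplex_def intro!: sum.cong)
  also have "\<dots> \<le> 1" using x by (simp add: std_simplex_def)
  finally show "norm x \<le> 1" .
qed

lemma compact_simplex: "compact (std_simplex :: (real^'n::finite) set)"
  using closed_simplex bounded_simplex by (simp add: compact_eq_bounded_closed)

lemma mid_ineq:
  fixes f :: "real^'n::finite \<Rightarrow> real"
  assumes ac: "axially_convex f" and p: "p \<in> std_simplex" and q: "q \<in> std_simplex"
    and u: "u \<in> simplex_vertices" and w: "w \<in> simplex_vertices" and d: "q - p = c *\<^sub>R (u - w)"
  shows "2 * f ((1/2) *\<^sub>R (p + q)) \<le> f p + f q"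
proof -
  have "convex_on (closed_segment p q) f" using ac p q u w d unfolding axially_convex_def by blast
  from convex_onD[OF this, of "1/2" p q]
  have "f ((1 - 1/2) *\<^sub>R p + (1/2) *\<^sub>R q) \<le> (1 - 1/2) * f p + (1/2) * f q" by simp
  moreover have "(1 - 1/2) *\<^sub>R p + (1/2) *\<^sub>R q = (1/2) *\<^sub>R (p + q)" by (simp add: algebra_simps)
  ultimately show ?thesis by simp
qed

lemma space_M:
  assumes sM: "sets M = sets (restrict_space borel (std_simplex :: (real^'n::finite) set))"
  shows "space M = std_simplex"
  using sets_eq_imp_space_eq[OF sM] by (simp add: space_restrict_space)

lemma integ:
  fixes f :: "real^'n::finite \<Rightarrow> real" and P :: "real^'n \<Rightarrow> real^'n"
  assumes pM: "prob_space M" and sM: "sets M = sets (restrict_space borel std_simplex)"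
    and cf: "continuous_on std_simplex f" and cP: "continuous_on std_simplex P" and PS: "P ` std_simplex \<subseteq> std_simplex"
  shows "integrable M (\<lambda>s. f (P s))"
proof -
  interpret prob_space M by fact
  have sp: "space M = std_simplex" by (rule space_M[OF sM])
  have "continuous_on std_simplex (\<lambda>s. f (P s))" using continuous_on_compose2[OF cf cP PS] .
  hence "(\<lambda>s. f (P s)) \<in> borel_measurable (restrict_space borel std_simplex)"
    by (rule borel_measurable_continuous_on_restrict)
  hence meas: "(\<lambda>s. f (P s)) \<in> borel_measurable M" using measurable_cong_sets[OF sM refl] by blast
  obtain B where B: "\<forall>z\<in>f ` std_simplex. norm z \<le> B"
    using compact_imp_bounded[OF compact_continuous_image[OF cf compact_simplex]] unfolding bounded_iff by auto
  show ?thesis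
  proof (rule integrable_const_bound[where B=B])
    show "AE x in M. norm (f (P x)) \<le> B" using B PS sp by (auto intro!: AE_I2)
    show "(\<lambda>s. f (P s)) \<in> borel_measurable M" by (rule meas)
  qed
qed

lemma int_mid:
  fixes f :: "real^'n::finite \<Rightarrow> real" and P Q R :: "real^'n \<Rightarrow> real^'n"
  assumes pM: "prob_space M" and sM: "sets M = sets (restrict_space borel std_simplex)"
    and cf: "continuous_on std_simplex f" and ac: "axially_convex f"
    and cP: "continuous_on std_simplex P" and PS: "P ` std_simplex \<subseteq> std_simplex"
    and cQ: "continuous_on std_simplex Q" and QS: "Q ` std_simplex \<subseteq> std_simplex"
    and cR: "continuous_on std_simplex R" and RS: "R ` std_simplex \<subseteq> std_simplex"
    and u: "u \<in> simplex_vertices" and w: "w \<in> simplex_vertices"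
    and d: "\<And>s. s \<in> std_simplex \<Longrightarrow> Q s - P s = c *\<^sub>R (u - w)"
    and m: "\<And>s. s \<in> std_simplex \<Longrightarrow> R s = (1/2) *\<^sub>R (P s + Q s)"
  shows "2 * (\<integral>s. f (R s) \<partial>M) \<le> (\<integral>s. f (P s) \<partial>M) + (\<integral>s. f (Q s) \<partial>M)"
proof -
  have sp: "space M = std_simplex" by (rule space_M[OF sM])
  note iP = integ[OF pM sM cf cP PS] and iQ = integ[OF pM sM cf cQ QS] and iR = integ[OF pM sM cf cR RS]
  have "2 * (\<integral>s. f (R s) \<partial>M) = (\<integral>s. 2 * f (R s) \<partial>M)" by simp
  also have "\<dots> \<le> (\<integral>s. f (P s) + f (Q s) \<partial>M)"
  proof (rule integral_mono)
    show "integrable M (\<lambda>s. 2 * f (R s))" using iR by simp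
    show "integrable M (\<lambda>s. f (P s) + f (Q s))" using iP iQ by simp
    fix s assume "s \<in> space M"
    hence s: "s \<in> std_simplex" using sp by simp
    show "2 * f (R s) \<le> f (P s) + f (Q s)"
      using mid_ineq[OF ac _ _ u w d[OF s]] PS QS s m[OF s] by auto
  qed
  also have "\<dots> = (\<integral>s. f (P s) \<partial>M) + (\<integral>s. f (Q s) \<partial>M)" by (rule Bochner_Integration.integral_add[OF iP iQ])
  finally show ?thesis .
qed

lemma g_in:
  assumes "0 \<le> a" "1 \<le> n" "sz k \<le> n" "s \<in> std_simplex"
  shows "(1/(real n + a)) *\<^sub>R ((\<chi> i. real (k i)) + a *\<^sub>R s) \<in> (std_simplex :: (real^'n::finite) set)"
proof -
  have pos: "0 < real n + a" using assms by simp
  have c: "0 \<le> ((1/(real n + a)) *\<^sub>R ((\<chi> i. real (k i)) + a *\<^sub>R s)) $ i" for i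
    using assms pos by (auto simp: std_simplex_def)
  have "(\<Sum>i\<in>UNIV. ((1/(real n + a)) *\<^sub>R ((\<chi> i. real (k i)) + a *\<^sub>R s)) $ i)
      = (real (sz k) + a * (\<Sum>i\<in>UNIV. s$i)) / (real n + a)"
    by (simp add: sum.distrib sum_distrib_left sz_def add_divide_distrib sum_divide_distrib)
  also have "\<dots> \<le> 1"
  proof -
    have "a * (\<Sum>i\<in>UNIV. s$i) \<le> a * 1"
      using assms by (intro mult_left_mono) (auto simp: std_simplex_def)
    moreover have "real (sz k) \<le> real n" using assms by simp
    ultimately show ?thesis using pos by simp
  qed
  finally show ?thesis using c by (simp add: std_simplex_def)
qed

lemma chi_incr: "(\<chi> l. real (incr i k l)) = (\<chi> l. real (k l)) + (axis i 1 :: real^'n::finite)"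
  by (simp add: vec_eq_iff incr_def axis_def)

lemma sz_incr2: "sz (incr i (incr j k)) = sz k + 2"
  by (simp add: sz_incr)

theorem corollary5p6:
  fixes a :: real and \<mu> :: "nat \<Rightarrow> (real ^ 'n) measure"
    and n :: nat and f :: "real ^ 'n \<Rightarrow> real"
  assumes "0 \<le> a"
    and "\<And>m. m \<ge> 1 \<Longrightarrow> prob_space (\<mu> m)"
    and "\<And>m. m \<ge> 1 \<Longrightarrow> sets (\<mu> m) = sets (restrict_space borel std_simplex)"
    and "n \<ge> 1"
    and "continuous_on std_simplex f"
    and "axially_convex f"
  shows "continuous_on std_simplex (C_op a (\<mu> n) n f) \<and> axially_convex (C_op a (\<mu> n) n f)"
proof -
  have pM: "prob_space (\<mu> n)" using assms(2,4) .
  have sM: "sets (\<mu> n) = sets (restrict_space borel std_simplex)" using assms(3,4) .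
  note cf = assms(5) and ac = assms(6)
  define e where "e = 1 / (real n + a)"
  define g where "g k s = e *\<^sub>R ((\<chi> i. real (k i)) + a *\<^sub>R s)" for k :: "'n \<Rightarrow> nat" and s :: "real^'n"
  define F where "F k = (\<integral>s. f (g k s) \<partial>\<mu> n)" for k
  have C: "C_op a (\<mu> n) n f = Bern n F"
    by (rule ext) (simp add: C_op_def Bern_def F_def g_def e_def mlt_def mon_def sl_def sz_def)
  have cont: "continuous_on std_simplex (Bern n F)"
    unfolding Bern_def mlt_def mon_def sl_def by (intro continuous_intros)
  have gS: "g k ` std_simplex \<subseteq> std_simplex" if "sz k \<le> n" for k
    using g_in[OF assms(1) assms(4) that] unfolding g_def e_def by auto
  have gc: "continuous_on std_simplex (g k)" for k unfolding g_def by (intro continuous_intros)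
  have ginc: "g (incr i k) s = g k s + e *\<^sub>R axis i 1" for i k s
    by (simp add: g_def chi_incr algebra_simps)
  have ax: "axis i 1 \<in> simplex_vertices" for i by (simp add: simplex_vertices_def)
  have z: "0 \<in> simplex_vertices" by (simp add: simplex_vertices_def)
  have FA: "0 \<le> F (incr i (incr i k)) + F (incr j (incr j k)) - 2 * F (incr i (incr j k))"
    if "sz k + 2 \<le> n" for i j k
  proof -
    have "2 * F (incr i (incr j k)) \<le> F (incr i (incr i k)) + F (incr j (incr j k))"
      unfolding F_def
    proof (rule int_mid[OF pM sM cf ac gc gS gc gS gc gS ax ax])
      show "sz (incr i (incr i k)) \<le> n" "sz (incr j (incr j k)) \<le> n" "sz (incr i (incr j k)) \<le> n"
        using that by (simp_all add: sz_incr2)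
      fix s
      show "g (incr j (incr j k)) s - g (incr i (incr i k)) s = (2 * e) *\<^sub>R (axis j 1 - axis i 1)"
        by (simp add: ginc vec_eq_iff algebra_simps)
      show "g (incr i (incr j k)) s = (1/2) *\<^sub>R (g (incr i (incr i k)) s + g (incr j (incr j k)) s)"
        by (simp add: ginc vec_eq_iff algebra_simps)
    qed
    thus ?thesis by simp
  qed
  have FB: "0 \<le> F (incr i (incr i k)) + F k - 2 * F (incr i k)"
    if "sz k + 2 \<le> n" for i k
  proof -
    have "2 * F (incr i k) \<le> F k + F (incr i (incr i k))"
      unfolding F_def
    proof (rule int_mid[OF pM sM cf ac gc gS gc gS gc gS ax z])
      show "sz k \<le> n" "sz (incr i (incr i k)) \<le> n" "sz (incr i k) \<le> n"
        using that by (simp_all add: sz_incr2 sz_incr)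
      fix s
      show "g (incr i (incr i k)) s - g k s = (2 * e) *\<^sub>R (axis i 1 - 0)"
        by (simp add: ginc vec_eq_iff algebra_simps)
      show "g (incr i k) s = (1/2) *\<^sub>R (g k s + g (incr i (incr i k)) s)"
        by (simp add: ginc vec_eq_iff algebra_simps)
    qed
    thus ?thesis by simp
  qed
  have axc: "axially_convex (Bern n F)"
    unfolding axially_convex_def
  proof (intro ballI impI)
    fix x y :: "real^'n"
    assume x: "x \<in> std_simplex" and y: "y \<in> std_simplex"
      and "\<exists>u\<in>simplex_vertices. \<exists>w\<in>simplex_vertices. \<exists>c::real. y - x = c *\<^sub>R (u - w)"
    then obtain u w c where u: "u \<in> simplex_vertices" and w: "w \<in> simplex_vertices"
      and d: "y - x = c *\<^sub>R (u - w)" by blast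
    show "convex_on (closed_segment x y) (Bern n F)"
    proof (rule Bern_seg_convex[OF x y])
      fix k :: "'n \<Rightarrow> nat" assume "2 \<le> n" "k \<in> multi_indices (n - 2)"
      hence k: "sz k + 2 \<le> n" by (simp add: mi_iff)
      have uc: "u = 0 \<or> (\<exists>i. u = axis i 1)" and wc: "w = 0 \<or> (\<exists>i. w = axis i 1)"
        using u w by (auto simp: simplex_vertices_def)
      show "0 \<le> Dv (y - x) (Dv (y - x) F) k"
      proof (cases "u = 0")
        case True
        show ?thesis
        proof (cases "w = 0")
          case True
          with \<open>u = 0\<close> d have "y - x = 0" by simp
          thus ?thesis by (simp add: Dv_def)
        next
          case False
          then obtain j where j: "w = axis j 1" using wc by auto
          have e: "y - x = (- c) *\<^sub>R axis j 1" using d \<open>u = 0\<close> j by simp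
          show ?thesis unfolding e DD_B using FB[OF k] by simp
        qed
      next
        case False
        then obtain i where i: "u = axis i 1" using uc by auto
        show ?thesis
        proof (cases "w = 0")
          case True
          have e: "y - x = c *\<^sub>R axis i 1" using d True i by simp
          show ?thesis unfolding e DD_B using FB[OF k] by simp
        next
          case False
          then obtain j where j: "w = axis j 1" using wc by auto
          have e: "y - x = c *\<^sub>R (axis i 1 - axis j 1)" using d i j by simp
          show ?thesis unfolding e DD_A using FA[OF k] by simp
        qed
      qed
    qed
  qed
  show ?thesis unfolding C using cont axc by simp
qed

end
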